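(* Let $d\in\mathbb N\cup\{\infty\}$, $C>0$, and let ${\boldsymbol\gamma}$ be product weights. (1) If ${\boldsymbol\gamma}\in\mathcal S_{d,C}$, then $c:=\prod_{j\in[d]}(1+C^2\gamma_j)\in[1,\infty)$, the product weights ${\boldsymbol\eta}$ given by $\eta_u=C^{2|u|}\gamma_u$ lie in $\mathcal S_{d,C}$, and ${\boldsymbol\eta}\le T^\uparrow_{d,C}{\boldsymbol\gamma}\le c\,{\boldsymbol\eta}$. (2) If ${\boldsymbol\gamma}\in\mathcal M_d$, then with $c':=\prod_{j\in[d]}(1-\gamma_j)\in[0,1]$ and the product weights ${\boldsymbol\zeta}$ given by $\zeta_u=C^{-2|u|}\gamma_u$ we have $c'\,{\boldsymbol\zeta}\le T^\downarrow_{d,C}{\boldsymbol\gamma}\le{\boldsymbol\zeta}$. Furthermore ${\boldsymbol\zeta}\in\mathcal S_{d,C}$ iff ${\boldsymbol\gamma}\in\mathcal S_{d,C}$.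
   Context: Write $[d]=\{1,\dots,d\}$ if $d\in\mathbb N$ and $[d]=\mathbb N$ if $d=\infty$; $[s]=\{1,\dots,s\}$. $\mathcal U_d$ is the set of finite subsets of $[d]$; weights are families $(\gamma_u)_{u\in\mathcal U_d}$ of non-negative reals ($\mathcal W_d$), compared componentwise. Product weights: $\gamma_u=\prod_{j\in u}\gamma_j$, $\gamma_\emptyset=1$, for a non-increasing sequence $(\gamma_j)_{j\in[d]}$ of non-negative reals. $(\Delta_v{\boldsymbol\gamma})_u=\sum_{w\subseteq v}(-1)^{|w|}\gamma_{u\cup w}$; $\mathcal M_d$ is the set of weights with $\Delta_v{\boldsymbol\gamma}\ge\mathbf 0$ for all $v$. For $C>0$: $\mathcal S_{d,C}=\{{\boldsymbol\gamma}\in\mathcal W_d:\sum_vC^{2|v|}\gamma_v<\infty\}$; $(T^\uparrow_{d,C}{\boldsymbol\gamma})_u=\sum_{v\supseteq u}C^{2|v|}\gamma_v$ on $\mathcal S_{d,C}$; on $\mathcal M_d$, $(T^\downarrow_{d,C}{\boldsymbol\gamma})_u=C^{-2|u|}(\Delta_{[d]\setminus u}{\boldsymbol\gamma})_u$ if $d\in\mathbb N$ and $C^{-2|u|}\lim_{s\to\infty}(\Delta_{[s]\setminus u}{\boldsymbol\gamma})_u$ if $d=\infty$. Infinite products are understood as limits of partial products. *)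

theory Defs
  imports "HOL-Analysis.Analysis" "HOL-Library.Extended_Nat"
begin

definition idx :: "enat \<Rightarrow> nat set" where
  "idx d = {j. 1 \<le> j \<and> enat j \<le> d}"

definition U :: "enat \<Rightarrow> nat set set" where
  "U d = {u. finite u \<and> u \<subseteq> idx d}"

definition pw :: "(nat \<Rightarrow> real) \<Rightarrow> nat set \<Rightarrow> real" where
  "pw g u = (\<Prod>j\<in>u. g j)"

definition is_pw_seq :: "enat \<Rightarrow> (nat \<Rightarrow> real) \<Rightarrow> bool" where
  "is_pw_seq d g \<longleftrightarrow> (\<forall>j\<in>idx d. 0 \<le> g j) \<and>
      (\<forall>i\<in>idx d. \<forall>j\<in>idx d. i \<le> j \<longrightarrow> g j \<le> g i)"

definition S :: "enat \<Rightarrow> real \<Rightarrow> (nat set \<Rightarrow> real) \<Rightarrow> bool" where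
  "S d C \<gamma> \<longleftrightarrow> (\<forall>u\<in>U d. 0 \<le> \<gamma> u) \<and>
      (\<lambda>v. C ^ (2 * card v) * \<gamma> v) summable_on U d"

definition Tup :: "enat \<Rightarrow> real \<Rightarrow> (nat set \<Rightarrow> real) \<Rightarrow> nat set \<Rightarrow> real" where
  "Tup d C \<gamma> u = infsum (\<lambda>v. C ^ (2 * card v) * \<gamma> v) {v\<in>U d. u \<subseteq> v}"

definition Delta :: "nat set \<Rightarrow> (nat set \<Rightarrow> real) \<Rightarrow> nat set \<Rightarrow> real" where
  "Delta v \<gamma> u = (\<Sum>w\<in>Pow v. (-1) ^ card w * \<gamma> (u \<union> w))"

definition M :: "enat \<Rightarrow> (nat set \<Rightarrow> real) \<Rightarrow> bool" where
  "M d \<gamma> \<longleftrightarrow> (\<forall>u\<in>U d. 0 \<le> \<gamma> u) \<and> (\<forall>u\<in>U d. \<forall>v\<in>U d. 0 \<le> Delta v \<gamma> u)"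

definition Tdown :: "enat \<Rightarrow> real \<Rightarrow> (nat set \<Rightarrow> real) \<Rightarrow> nat set \<Rightarrow> real" where
  "Tdown d C \<gamma> u = inverse (C ^ (2 * card u)) *
     (case d of enat n \<Rightarrow> Delta ({1..n} - u) \<gamma> u
              | \<infinity> \<Rightarrow> lim (\<lambda>s. Delta ({1..s} - u) \<gamma> u))"

definition prod_over_d :: "enat \<Rightarrow> (nat \<Rightarrow> real) \<Rightarrow> real" where
  "prod_over_d d f = (case d of enat n \<Rightarrow> (\<Prod>j=1..n. f j)
                        | \<infinity> \<Rightarrow> lim (\<lambda>n. \<Prod>j=1..n. f j))"

definition prod_over_d_conv :: "enat \<Rightarrow> (nat \<Rightarrow> real) \<Rightarrow> bool" where
  "prod_over_d_conv d f \<longleftrightarrow> (d = \<infinity> \<longrightarrow> convergent (\<lambda>n. \<Prod>j=1..n. f j))"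

end

theory Submission
  imports Defs
begin

lemma sum_le_infsum_nn:
  fixes f :: "'a \<Rightarrow> real"
  assumes "f summable_on A" "finite F" "F \<subseteq> A" "\<And>x. x \<in> A \<Longrightarrow> 0 \<le> f x"
  shows "sum f F \<le> infsum f A"
proof -
  have "infsum f F \<le> infsum f A"
    by (rule infsum_mono_neutral) (use assms in auto)
  then show ?thesis using assms(2) by simp
qed

lemma pw_scale: "C ^ (2 * card v) * pw f v = pw (\<lambda>j. C^2 * f j) v"
  unfolding pw_def by (simp add: prod.distrib power_mult)

lemma pw_pow_sum: "finite J \<Longrightarrow> (\<Sum>w\<in>Pow J. pw f w) = (\<Prod>j\<in>J. 1 + f j)"
  unfolding pw_def using prod_add[of J f "\<lambda>_. 1"] by (simp add: add.commute)

lemma prod_le_exp_sum: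
  fixes f :: "nat \<Rightarrow> real"
  assumes "\<And>j. j \<in> J \<Longrightarrow> 0 \<le> f j"
  shows "(\<Prod>j\<in>J. 1 + f j) \<le> exp (\<Sum>j\<in>J. f j)"
proof (cases "finite J")
  case True
  have "(\<Prod>j\<in>J. 1 + f j) \<le> (\<Prod>j\<in>J. exp (f j))"
    by (rule prod_mono) (use assms in \<open>auto simp: exp_ge_add_one_self add.commute\<close>)
  also have "\<dots> = exp (\<Sum>j\<in>J. f j)" using True by (simp add: exp_sum)
  finally show ?thesis .
qed simp

lemma pw_nonneg: "(\<And>j. j \<in> v \<Longrightarrow> 0 \<le> f j) \<Longrightarrow> 0 \<le> pw f v"
  unfolding pw_def by (rule prod_nonneg) auto

lemma pw_summ:
  fixes f :: "nat \<Rightarrow> real"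
  assumes nn: "\<And>j. j \<in> I \<Longrightarrow> 0 \<le> f j"
    and bd: "\<And>J. finite J \<Longrightarrow> J \<subseteq> I \<Longrightarrow> sum f J \<le> B"
  shows "pw f summable_on {v. finite v \<and> v \<subseteq> I}"
proof (rule nonneg_bdd_above_summable_on)
  show "\<And>x. x \<in> {v. finite v \<and> v \<subseteq> I} \<Longrightarrow> 0 \<le> pw f x"
    using nn by (auto intro!: pw_nonneg)
  show "bdd_above (sum (pw f) ` {F. F \<subseteq> {v. finite v \<and> v \<subseteq> I} \<and> finite F})"
  proof (rule bdd_aboveI2)
    fix F assume F: "F \<in> {F. F \<subseteq> {v. finite v \<and> v \<subseteq> I} \<and> finite F}"
    define J where "J = \<Union>F"
    have fJ: "finite J" "J \<subseteq> I" using F by (auto simp: J_def)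
    have pn: "\<forall>v\<in>Pow J. 0 \<le> pw f v" using fJ nn by (auto intro!: pw_nonneg)
    have "sum (pw f) F \<le> sum (pw f) (Pow J)"
      by (rule sum_mono2) (use fJ F pn in \<open>auto simp: J_def\<close>)
    also have "\<dots> = (\<Prod>j\<in>J. 1 + f j)" using fJ by (simp add: pw_pow_sum)
    also have "\<dots> \<le> exp (sum f J)" using fJ nn by (intro prod_le_exp_sum) auto
    also have "\<dots> \<le> exp B" using bd[OF fJ] by simp
    finally show "sum (pw f) F \<le> exp B" .
  qed
qed

lemma pw_sing:
  fixes f :: "nat \<Rightarrow> real"
  assumes nn: "\<And>j. j \<in> I \<Longrightarrow> 0 \<le> f j"
    and sm: "pw f summable_on {v. finite v \<and> v \<subseteq> I}"
    and J: "finite J" "J \<subseteq> I"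
  shows "sum f J \<le> infsum (pw f) {v. finite v \<and> v \<subseteq> I}"
proof -
  have "sum f J = sum (pw f) ((\<lambda>j. {j}) ` J)"
    by (subst sum.reindex) (auto simp: inj_on_def pw_def)
  also have "\<dots> \<le> infsum (pw f) {v. finite v \<and> v \<subseteq> I}"
    by (rule sum_le_infsum_nn[OF sm]) (use J nn in \<open>auto intro!: pw_nonneg\<close>)
  finally show ?thesis .
qed

lemma prod_subset_ge1:
  fixes f :: "nat \<Rightarrow> real"
  assumes "finite B" "A \<subseteq> B" "\<And>j. j \<in> B \<Longrightarrow> 1 \<le> f j"
  shows "prod f A \<le> prod f B"
proof -
  have "prod f B = prod f (B - A) * prod f A" using prod.subset_diff[OF assms(2,1)] by simp
  moreover have "1 \<le> prod f (B - A)" using assms by (intro prod_ge_1) auto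
  moreover have "0 \<le> prod f A" using assms by (intro prod_nonneg) (auto intro: order_trans[OF zero_le_one])
  ultimately show ?thesis by (simp add: mult_le_cancel_right1)
qed

lemma prod_subset_le1:
  fixes f :: "nat \<Rightarrow> real"
  assumes "finite B" "A \<subseteq> B" "\<And>j. j \<in> B \<Longrightarrow> 0 \<le> f j \<and> f j \<le> 1"
  shows "prod f B \<le> prod f A"
proof -
  have "prod f B = prod f (B - A) * prod f A" using prod.subset_diff[OF assms(2,1)] by simp
  moreover have "prod f (B - A) \<le> 1" using assms by (intro prod_le_1) auto
  moreover have "0 \<le> prod f A" using assms by (intro prod_nonneg) auto
  ultimately show ?thesis using mult_right_mono[of "prod f (B-A)" 1 "prod f A"] by simp
qed

lemma pw_union: "finite u \<Longrightarrow> finite w \<Longrightarrow> u \<inter> w = {} \<Longrightarrow> pw f (u \<union> w) = pw f u * pw f w"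
  unfolding pw_def by (rule prod.union_disjoint)

lemma Delta_pw:
  assumes "finite v" "finite u" "u \<inter> v = {}"
  shows "Delta v (pw g) u = pw g u * (\<Prod>j\<in>v. 1 - g j)"
proof -
  have "Delta v (pw g) u = (\<Sum>w\<in>Pow v. pw g u * pw (\<lambda>j. - g j) w)"
    unfolding Delta_def
  proof (rule sum.cong)
    fix w assume w: "w \<in> Pow v"
    then have fw: "finite w" using assms finite_subset by auto
    have "pw g (u \<union> w) = pw g u * pw g w" using w assms fw by (intro pw_union) auto
    moreover have "(-1) ^ card w * pw g w = pw (\<lambda>j. - g j) w"
      unfolding pw_def by (simp add: prod.distrib[symmetric] prod_constant[symmetric] del: prod_constant)
    ultimately show "(- 1) ^ card w * pw g (u \<union> w) = pw g u * pw (\<lambda>j. - g j) w"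
      by (metis mult.left_commute)
  qed simp
  also have "\<dots> = pw g u * (\<Prod>j\<in>v. 1 - g j)"
    by (simp add: sum_distrib_left[symmetric] pw_pow_sum assms)
  finally show ?thesis .
qed


lemma U_eq: "U d = {v. finite v \<and> v \<subseteq> idx d}" by (simp add: U_def)

lemma idx_enat: "idx (enat n) = {1..n}" by (auto simp: idx_def)
lemma idx_inf: "idx \<infinity> = {1..}" by (auto simp: idx_def)

lemma fin_sub_interval:
  assumes "finite J" "J \<subseteq> {1::nat..}" obtains k where "J \<subseteq> {1..k}"
proof -
  obtain k where "J \<subseteq> {..<k}" using finite_nat_bounded[OF assms(1)] by blast
  then have "J \<subseteq> {1..k}" using assms(2) by (auto simp: subset_iff)
  then show ?thesis using that by blast
qed

lemma part1_gen:
  fixes h :: "nat \<Rightarrow> real"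
  assumes hnn: "\<And>j. j \<in> idx d \<Longrightarrow> 0 \<le> h j" and sm: "pw h summable_on U d"
  shows "prod_over_d_conv d (\<lambda>j. 1 + h j) \<and> 1 \<le> prod_over_d d (\<lambda>j. 1 + h j) \<and>
     pw (\<lambda>j. C^2 * h j) summable_on U d \<and>
     (\<forall>u\<in>U d. pw h u \<le> infsum (pw h) {v\<in>U d. u \<subseteq> v} \<and>
        infsum (pw h) {v\<in>U d. u \<subseteq> v} \<le> prod_over_d d (\<lambda>j. 1 + h j) * pw h u)"
proof -
  define c where "c = prod_over_d d (\<lambda>j. 1 + h j)"
  define B where "B = infsum (pw h) (U d)"
  have hB: "sum h J \<le> B" if "finite J" "J \<subseteq> idx d" for J
    unfolding B_def U_eq using pw_sing[of "idx d" h J] hnn sm that by (simp add: U_eq)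
  have key: "prod_over_d_conv d (\<lambda>j. 1 + h j) \<and> 1 \<le> c \<and>
     (\<forall>J. finite J \<and> J \<subseteq> idx d \<longrightarrow> (\<Prod>j\<in>J. 1 + h j) \<le> c)"
  proof (cases d)
    case (enat n)
    show ?thesis unfolding c_def prod_over_d_conv_def prod_over_d_def enat
      using hnn by (auto simp: idx_enat enat intro!: prod_ge_1 prod_subset_ge1)
  next
    case infinity
    define P where "P n = (\<Prod>j=1..n. 1 + h j)" for n
    have inc: "incseq P" unfolding incseq_def P_def
      using hnn by (auto simp: infinity idx_inf intro!: prod_subset_ge1)
    have bd: "\<forall>i. P i \<le> exp B"
    proof
      fix i
      have "P i \<le> exp (sum h {1..i})" unfolding P_def
        using hnn by (intro prod_le_exp_sum) (auto simp: infinity idx_inf)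
      also have "\<dots> \<le> exp B" using hB[of "{1..i}"] by (auto simp: infinity idx_inf)
      finally show "P i \<le> exp B" .
    qed
    obtain L where L: "P \<longlonglongrightarrow> L" "\<forall>i. P i \<le> L" using incseq_convergent[OF inc bd] by blast
    have Peq: "(\<lambda>n. \<Prod>j=1..n. 1 + h j) = P" by (simp add: P_def fun_eq_iff)
    have cL: "c = L" unfolding c_def prod_over_d_def infinity using L(1) Peq by (simp add: limI)
    have "prod_over_d_conv d (\<lambda>j. 1 + h j)" unfolding prod_over_d_conv_def
      using L(1) Peq convergent_def by auto
    moreover have "1 \<le> c" using L(2)[rule_format, of 0] cL by (simp add: P_def)
    moreover have "(\<Prod>j\<in>J. 1 + h j) \<le> c" if J: "finite J" "J \<subseteq> idx d" for J
    proof -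
      obtain k where k: "J \<subseteq> {1..k}" using fin_sub_interval[of J] J by (auto simp: infinity idx_inf)
      have "(\<Prod>j\<in>J. 1 + h j) \<le> P k" unfolding P_def
        using hnn k by (intro prod_subset_ge1) (auto simp: infinity idx_inf)
      then show ?thesis using L(2) cL by (metis order_trans)
    qed
    ultimately show ?thesis by blast
  qed
  have sm2: "pw (\<lambda>j. C^2 * h j) summable_on U d"
    unfolding U_eq
  proof (rule pw_summ[where B = "C^2 * B"])
    show "\<And>j. j \<in> idx d \<Longrightarrow> 0 \<le> C\<^sup>2 * h j" using hnn by simp
    fix J assume "finite J" "J \<subseteq> idx d"
    then show "(\<Sum>j\<in>J. C\<^sup>2 * h j) \<le> C\<^sup>2 * B"
      using hB by (simp add: sum_distrib_left[symmetric] mult_left_mono)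
  qed
  have tup: "pw h u \<le> infsum (pw h) {v\<in>U d. u \<subseteq> v} \<and> infsum (pw h) {v\<in>U d. u \<subseteq> v} \<le> c * pw h u"
    if u: "u \<in> U d" for u
  proof
    define A where "A = {v\<in>U d. u \<subseteq> v}"
    have smA: "pw h summable_on A" using summable_on_subset_banach[OF sm] A_def by auto
    have nnA: "\<And>v. v \<in> A \<Longrightarrow> 0 \<le> pw h v" using hnn by (auto simp: A_def U_eq intro!: pw_nonneg)
    have "sum (pw h) {u} \<le> infsum (pw h) A"
      by (rule sum_le_infsum_nn[OF smA]) (use u nnA in \<open>auto simp: A_def\<close>)
    then show "pw h u \<le> infsum (pw h) {v\<in>U d. u \<subseteq> v}" by (simp add: A_def)
    show "infsum (pw h) {v\<in>U d. u \<subseteq> v} \<le> c * pw h u"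
      unfolding A_def[symmetric]
    proof (rule infsum_le_finite_sums[OF smA])
      fix F assume F: "finite F" "F \<subseteq> A"
      define J where "J = u \<union> \<Union>F"
      have fJ: "finite J" "J \<subseteq> idx d" using F u by (auto simp: J_def A_def U_eq)
      have pn: "\<forall>v\<in>Pow J. 0 \<le> pw h v" using fJ hnn by (auto intro!: pw_nonneg)
      have FA: "F \<subseteq> {v\<in>Pow J. u \<subseteq> v}"
      proof
        fix v assume "v \<in> F"
        then have "v \<in> A" "v \<subseteq> \<Union>F" using F by auto
        then show "v \<in> {v\<in>Pow J. u \<subseteq> v}" by (auto simp: A_def J_def)
      qed
      have "sum (pw h) F \<le> sum (pw h) {v\<in>Pow J. u \<subseteq> v}"
        by (rule sum_mono2) (use fJ(1) FA pn in auto)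
      also have "{v\<in>Pow J. u \<subseteq> v} = (\<lambda>w. u \<union> w) ` Pow (J - u)"
      proof (rule set_eqI, rule iffI)
        fix v assume "v \<in> {v\<in>Pow J. u \<subseteq> v}"
        then have "v = u \<union> (v - u)" "v - u \<in> Pow (J - u)" by auto
        then show "v \<in> (\<lambda>w. u \<union> w) ` Pow (J - u)" by blast
      next
        fix v assume "v \<in> (\<lambda>w. u \<union> w) ` Pow (J - u)"
        then show "v \<in> {v\<in>Pow J. u \<subseteq> v}" by (auto simp: J_def)
      qed
      also have "sum (pw h) \<dots> = (\<Sum>w\<in>Pow (J - u). pw h (u \<union> w))"
        by (rule sum.reindex_cong[where l = "\<lambda>w. u \<union> w"]) (auto simp: inj_on_def)
      also have "\<dots> = (\<Sum>w\<in>Pow (J - u). pw h u * pw h w)"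
        by (rule sum.cong) (use fJ u in \<open>auto simp: J_def U_eq intro!: pw_union dest: finite_subset\<close>)
      also have "\<dots> = pw h u * (\<Prod>j\<in>J - u. 1 + h j)"
        using fJ by (simp add: sum_distrib_left[symmetric] pw_pow_sum)
      also have "\<dots> \<le> pw h u * (\<Prod>j\<in>J. 1 + h j)"
        using fJ hnn u by (intro mult_left_mono prod_subset_ge1 pw_nonneg) (auto simp: U_eq)
      also have "\<dots> \<le> pw h u * c"
        using fJ hnn u key by (intro mult_left_mono pw_nonneg) (auto simp: U_eq)
      finally show "sum (pw h) F \<le> c * pw h u" by (simp add: mult.commute)
    qed
  qed
  show ?thesis using key sm2 tup c_def by blast
qed


lemma zeta_eq:
  assumes "C \<noteq> 0"
  shows "pw (\<lambda>j. g j / C^2) u = inverse (C ^ (2 * card u)) * pw g u"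
proof -
  have "(\<Prod>j\<in>u. g j / C^2) = (\<Prod>j\<in>u. g j) * inverse (C^2) ^ card u"
    by (simp add: divide_inverse prod.distrib)
  also have "inverse (C^2) ^ card u = inverse (C ^ (2 * card u))"
    by (simp add: power_inverse power_mult)
  finally show ?thesis unfolding pw_def by (simp add: mult.commute)
qed

lemma part2:
  fixes C :: real and g :: "nat \<Rightarrow> real"
  assumes C: "C > 0" and g: "is_pw_seq d g" and Md: "M d (pw g)"
  shows "prod_over_d_conv d (\<lambda>j. 1 - g j) \<and> 0 \<le> prod_over_d d (\<lambda>j. 1 - g j) \<and>
     prod_over_d d (\<lambda>j. 1 - g j) \<le> 1 \<and>
     (\<forall>u\<in>U d. prod_over_d d (\<lambda>j. 1 - g j) * pw (\<lambda>j. g j / C^2) u \<le> Tdown d C (pw g) u \<and>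
        Tdown d C (pw g) u \<le> pw (\<lambda>j. g j / C^2) u) \<and>
     (S d C (pw (\<lambda>j. g j / C^2)) \<longleftrightarrow> S d C (pw g))"
proof -
  define c where "c = prod_over_d d (\<lambda>j. 1 - g j)"
  have gnn: "\<And>j. j \<in> idx d \<Longrightarrow> 0 \<le> g j" using g by (auto simp: is_pw_seq_def)
  have g1: "g j \<le> 1" if j: "j \<in> idx d" for j
  proof -
    have "{j} \<in> U d" "{} \<in> U d" using j by (auto simp: U_eq)
    then have "0 \<le> Delta {j} (pw g) {}" using Md by (auto simp: M_def)
    also have "Delta {j} (pw g) {} = 1 - g j" by (subst Delta_pw) (auto simp: pw_def)
    finally show ?thesis by simp
  qed
  have q01: "\<And>j. j \<in> idx d \<Longrightarrow> 0 \<le> 1 - g j \<and> 1 - g j \<le> 1" using gnn g1 by auto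
  have key: "prod_over_d_conv d (\<lambda>j. 1 - g j) \<and> 0 \<le> c \<and> c \<le> 1 \<and>
     (\<forall>u\<in>U d. \<exists>Q. c \<le> Q \<and> Q \<le> 1 \<and> Tdown d C (pw g) u = inverse (C ^ (2 * card u)) * pw g u * Q)"
  proof (cases d)
    case (enat n)
    have "Tdown d C (pw g) u = inverse (C ^ (2 * card u)) * pw g u * (\<Prod>j\<in>{1..n} - u. 1 - g j)
       \<and> c \<le> (\<Prod>j\<in>{1..n} - u. 1 - g j) \<and> (\<Prod>j\<in>{1..n} - u. 1 - g j) \<le> 1" if u: "u \<in> U d" for u
      using u q01 unfolding Tdown_def c_def prod_over_d_def enat
      by (auto simp: Delta_pw U_eq idx_enat enat intro!: prod_subset_le1 prod_le_1)
    then have "\<forall>u\<in>U d. \<exists>Q. c \<le> Q \<and> Q \<le> 1 \<and> Tdown d C (pw g) u = inverse (C ^ (2 * card u)) * pw g u * Q"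
      by blast
    moreover have "0 \<le> c \<and> c \<le> 1" unfolding c_def prod_over_d_def enat
      using q01 by (auto simp: idx_enat enat intro!: prod_nonneg prod_le_1)
    ultimately show ?thesis by (simp add: prod_over_d_conv_def enat)
  next
    case infinity
    define P where "P n = (\<Prod>j=1..n. 1 - g j)" for n
    have dec: "decseq P" unfolding decseq_def P_def
      using q01 by (auto simp: infinity idx_inf intro!: prod_subset_le1)
    have bd: "\<forall>i. 0 \<le> P i" unfolding P_def using q01 by (auto simp: infinity idx_inf intro!: prod_nonneg)
    obtain L where L: "P \<longlonglongrightarrow> L" "\<forall>i. L \<le> P i" using decseq_convergent[OF dec bd] by blast
    have Peq: "(\<lambda>n. \<Prod>j=1..n. 1 - g j) = P" by (simp add: P_def fun_eq_iff)
    have cL: "c = L" unfolding c_def prod_over_d_def infinity using L(1) Peq by (simp add: limI)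
    have conv: "prod_over_d_conv d (\<lambda>j. 1 - g j)" unfolding prod_over_d_conv_def
      using L(1) Peq convergent_def by auto
    have L0: "0 \<le> L" using L(1) bd by (intro LIMSEQ_le_const) auto
    have L1: "L \<le> 1" using L(2)[rule_format, of 0] by (simp add: P_def)
    have "\<exists>Q. c \<le> Q \<and> Q \<le> 1 \<and> Tdown d C (pw g) u = inverse (C ^ (2 * card u)) * pw g u * Q"
      if u: "u \<in> U d" for u
    proof -
      define Q where "Q n = (\<Prod>j\<in>{1..n} - u. 1 - g j)" for n
      have decQ: "decseq Q" unfolding decseq_def Q_def
        using q01 by (intro allI impI prod_subset_le1) (auto simp: infinity idx_inf)
      have bdQ: "\<forall>i. 0 \<le> Q i" unfolding Q_def using q01 by (auto simp: infinity idx_inf intro!: prod_nonneg)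
      obtain L' where L': "Q \<longlonglongrightarrow> L'" "\<forall>i. L' \<le> Q i" using decseq_convergent[OF decQ bdQ] by blast
      have PQ: "P i \<le> Q i" for i unfolding P_def Q_def
        using q01 by (intro prod_subset_le1) (auto simp: infinity idx_inf)
      have LL: "L \<le> L'" using L(1) L'(1) PQ by (intro LIMSEQ_le) auto
      have L'1: "L' \<le> 1" using L'(2)[rule_format, of 0] by (simp add: Q_def)
      have fu: "finite u" using u by (auto simp: U_eq)
      have Deq: "(\<lambda>s. Delta ({1..s} - u) (pw g) u) = (\<lambda>s. pw g u * Q s)"
        using fu by (auto simp: fun_eq_iff Delta_pw Q_def)
      have "(\<lambda>s. pw g u * Q s) \<longlonglongrightarrow> pw g u * L'" using L'(1) by (intro tendsto_mult_left)
      then have "lim (\<lambda>s. Delta ({1..s} - u) (pw g) u) = pw g u * L'" unfolding Deq by (rule limI)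
      then have "Tdown d C (pw g) u = inverse (C ^ (2 * card u)) * pw g u * L'"
        unfolding Tdown_def infinity by simp
      then show ?thesis using LL L'1 cL by blast
    qed
    then show ?thesis using conv cL L0 L1 by blast
  qed
  have bounds: "c * pw (\<lambda>j. g j / C^2) u \<le> Tdown d C (pw g) u \<and> Tdown d C (pw g) u \<le> pw (\<lambda>j. g j / C^2) u"
    if u: "u \<in> U d" for u
  proof -
    obtain Q where Q: "c \<le> Q" "Q \<le> 1" "Tdown d C (pw g) u = inverse (C ^ (2 * card u)) * pw g u * Q"
      using key u by blast
    have z: "pw (\<lambda>j. g j / C^2) u = inverse (C ^ (2 * card u)) * pw g u" using C zeta_eq by simp
    have zn: "0 \<le> inverse (C ^ (2 * card u)) * pw g u"
      using C u gnn by (intro mult_nonneg_nonneg pw_nonneg) (auto simp: U_eq)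
    define x where "x = inverse (C ^ (2 * card u)) * pw g u"
    have "c * x \<le> Q * x" "Q * x \<le> 1 * x"
      using mult_right_mono[OF Q(1) zn] mult_right_mono[OF Q(2) zn] by (simp_all add: x_def)
    then show ?thesis unfolding z Q(3) x_def[symmetric] by (simp add: mult.commute)
  qed
  have Seq: "S d C (pw (\<lambda>j. g j / C^2)) \<longleftrightarrow> S d C (pw g)"
  proof -
    have f1: "(\<lambda>v. C ^ (2 * card v) * pw (\<lambda>j. g j / C^2) v) = pw g"
      using C by (simp add: pw_scale fun_eq_iff)
    have f2: "(\<lambda>v. C ^ (2 * card v) * pw g v) = pw (\<lambda>j. C^2 * g j)"
      by (simp add: pw_scale fun_eq_iff)
    have n1: "\<forall>u\<in>U d. 0 \<le> pw (\<lambda>j. g j / C^2) u" using gnn by (auto simp: U_eq intro!: pw_nonneg)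
    have n2: "\<forall>u\<in>U d. 0 \<le> pw g u" using gnn by (auto simp: U_eq intro!: pw_nonneg)
    have "pw g summable_on U d \<longleftrightarrow> pw (\<lambda>j. C^2 * g j) summable_on U d"
    proof
      assume sm: "pw g summable_on U d"
      show "pw (\<lambda>j. C^2 * g j) summable_on U d" unfolding U_eq
      proof (rule pw_summ[where B = "C^2 * infsum (pw g) (U d)"])
        show "\<And>j. j \<in> idx d \<Longrightarrow> 0 \<le> C\<^sup>2 * g j" using gnn by simp
        fix J assume J: "finite J" "J \<subseteq> idx d"
        have "sum g J \<le> infsum (pw g) (U d)"
          using pw_sing[of "idx d" g J] gnn sm J by (simp add: U_eq)
        then show "(\<Sum>j\<in>J. C\<^sup>2 * g j) \<le> C\<^sup>2 * infsum (pw g) (U d)"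
          by (simp add: sum_distrib_left[symmetric] mult_left_mono)
      qed
    next
      assume sm: "pw (\<lambda>j. C^2 * g j) summable_on U d"
      show "pw g summable_on U d" unfolding U_eq
      proof (rule pw_summ[where B = "infsum (pw (\<lambda>j. C^2 * g j)) (U d) / C^2"])
        show "\<And>j. j \<in> idx d \<Longrightarrow> 0 \<le> g j" using gnn by simp
        fix J assume J: "finite J" "J \<subseteq> idx d"
        have "sum (\<lambda>j. C^2 * g j) J \<le> infsum (pw (\<lambda>j. C^2 * g j)) (U d)"
          using pw_sing[of "idx d" "\<lambda>j. C^2 * g j" J] gnn sm J by (simp add: U_eq)
        then have "C^2 * sum g J \<le> infsum (pw (\<lambda>j. C^2 * g j)) (U d)"
          by (simp add: sum_distrib_left)
        then show "sum g J \<le> infsum (pw (\<lambda>j. C^2 * g j)) (U d) / C^2"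
          using C by (simp add: pos_le_divide_eq mult.commute)
      qed
    qed
    then show ?thesis unfolding S_def f1 f2 using n1 n2 by simp
  qed
  show ?thesis using key bounds Seq c_def by blast
qed

theorem mainTheorem8:
  fixes d :: enat and C :: real and g :: "nat \<Rightarrow> real"
  assumes C: "C > 0" and g: "is_pw_seq d g"
  shows
   "(S d C (pw g) \<longrightarrow>
      (let c = prod_over_d d (\<lambda>j. 1 + C^2 * g j);
           \<eta> = pw (\<lambda>j. C^2 * g j)
       in prod_over_d_conv d (\<lambda>j. 1 + C^2 * g j) \<and> 1 \<le> c \<and>
          S d C \<eta> \<and>
          (\<forall>u\<in>U d. \<eta> u \<le> Tup d C (pw g) u \<and> Tup d C (pw g) u \<le> c * \<eta> u)))
    \<and>
    (M d (pw g) \<longrightarrow>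
      (let c' = prod_over_d d (\<lambda>j. 1 - g j);
           \<zeta> = pw (\<lambda>j. g j / C^2)
       in prod_over_d_conv d (\<lambda>j. 1 - g j) \<and> 0 \<le> c' \<and> c' \<le> 1 \<and>
          (\<forall>u\<in>U d. c' * \<zeta> u \<le> Tdown d C (pw g) u \<and> Tdown d C (pw g) u \<le> \<zeta> u) \<and>
          (S d C \<zeta> \<longleftrightarrow> S d C (pw g))))"
proof (intro conjI impI)
  assume Sg: "S d C (pw g)"
  define h where "h = (\<lambda>j. C^2 * g j)"
  have hnn: "\<And>j. j \<in> idx d \<Longrightarrow> 0 \<le> h j" using g by (auto simp: is_pw_seq_def h_def)
  have f2: "(\<lambda>v. C ^ (2 * card v) * pw g v) = pw h"
    by (simp add: pw_scale fun_eq_iff h_def)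
  have sm: "pw h summable_on U d" using Sg unfolding S_def f2 by simp
  have T: "Tup d C (pw g) u = infsum (pw h) {v\<in>U d. u \<subseteq> v}" for u
    unfolding Tup_def f2 ..
  have f3: "(\<lambda>v. C ^ (2 * card v) * pw h v) = pw (\<lambda>j. C^2 * h j)"
    by (simp add: pw_scale fun_eq_iff)
  have n: "\<forall>u\<in>U d. 0 \<le> pw h u" using hnn by (auto simp: U_eq intro!: pw_nonneg)
  from part1_gen[OF hnn sm, of C] have P: "prod_over_d_conv d (\<lambda>j. 1 + h j) \<and> 1 \<le> prod_over_d d (\<lambda>j. 1 + h j) \<and>
     pw (\<lambda>j. C^2 * h j) summable_on U d \<and>
     (\<forall>u\<in>U d. pw h u \<le> infsum (pw h) {v\<in>U d. u \<subseteq> v} \<and>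
        infsum (pw h) {v\<in>U d. u \<subseteq> v} \<le> prod_over_d d (\<lambda>j. 1 + h j) * pw h u)" by blast
  have SS: "S d C (pw h)" unfolding S_def f3 using n P by blast
  show "let c = prod_over_d d (\<lambda>j. 1 + C^2 * g j); \<eta> = pw (\<lambda>j. C^2 * g j)
       in prod_over_d_conv d (\<lambda>j. 1 + C^2 * g j) \<and> 1 \<le> c \<and>
          S d C \<eta> \<and>
          (\<forall>u\<in>U d. \<eta> u \<le> Tup d C (pw g) u \<and> Tup d C (pw g) u \<le> c * \<eta> u)"
    unfolding Let_def T using P SS unfolding h_def by blast
next
  assume "M d (pw g)"
  from part2[OF C g this] show "let c' = prod_over_d d (\<lambda>j. 1 - g j);
           \<zeta> = pw (\<lambda>j. g j / C^2)
       in prod_over_d_conv d (\<lambda>j. 1 - g j) \<and> 0 \<le> c' \<and> c' \<le> 1 \<and>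
          (\<forall>u\<in>U d. c' * \<zeta> u \<le> Tdown d C (pw g) u \<and> Tdown d C (pw g) u \<le> \<zeta> u) \<and>
          (S d C \<zeta> \<longleftrightarrow> S d C (pw g))"
    unfolding Let_def by blast
qed

end
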